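(* Let $k$ be a positive integer, $G>0$, and let $g_1,\dots,g_k$ be strongly additive functions with $0\le g_j(p)\le G$ for all $j$ and all $p\in\mathcal P$, and assume $\mathfrak K=\max_{1\le i\le k}\sigma^{\mathcal P}(g_i)^2\ge1$. Then $$S:=\sum_{\substack{p_1,\dots,p_k\in\mathcal P\\ p_1\cdots p_k\text{ squarefull}\\ \#\{p_1,\dots,p_k\}<k/2}}H(p_1\cdots p_k)g_1(p_1)\cdots g_k(p_k)$$ satisfies $S\ll\mathfrak K^{k/2-1}$ if $k$ is even and $S\ll\mathfrak K^{(k-1)/2}$ if $k$ is odd, with implied constants depending only on $k$ and $G$.
   Context: $\mathcal P$ is a finite set of primes and $h$ is multiplicative with $0\le h(d)\le d$. Strongly additive: $g(n)=\sum_{p\mid n}g(p)$. $\sigma^{\mathcal P}(g)^2=\sum_{p\in\mathcal P}g(p)^2\frac{h(p)}p\big(1-\frac{h(p)}p\big)$. $H$ is multiplicative with $H(p^\alpha)=\frac{h(p)}p\big(1-\frac{h(p)}p\big)^\alpha+\big(-\frac{h(p)}p\big)^\alpha\big(1-\frac{h(p)}p\big)$. The sum is over ordered $k$-tuples; squarefull means every prime divisor appears at least squared. *)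

theory Defs
  imports "HOL-Computational_Algebra.Primes" "HOL-Analysis.Analysis"
begin

definition multiplicative_fn :: "(nat \<Rightarrow> real) \<Rightarrow> bool" where
  "multiplicative_fn f \<longleftrightarrow> f 1 = 1 \<and>
     (\<forall>m n. m > 0 \<longrightarrow> n > 0 \<longrightarrow> coprime m n \<longrightarrow> f (m * n) = f m * f n)"

definition strongly_additive :: "(nat \<Rightarrow> real) \<Rightarrow> bool" where
  "strongly_additive g \<longleftrightarrow> (\<forall>n. n > 0 \<longrightarrow> g n = (\<Sum>p\<in>prime_factors n. g p))"

definition squarefull :: "nat \<Rightarrow> bool" where
  "squarefull n \<longleftrightarrow> (\<forall>q. prime q \<longrightarrow> q dvd n \<longrightarrow> q^2 dvd n)"

definition Hpp :: "(nat \<Rightarrow> real) \<Rightarrow> nat \<Rightarrow> nat \<Rightarrow> real" where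
  "Hpp h p a = (h p / p) * (1 - h p / p) ^ a + (- (h p / p)) ^ a * (1 - h p / p)"

definition Hfun :: "(nat \<Rightarrow> real) \<Rightarrow> nat \<Rightarrow> real" where
  "Hfun h n = (\<Prod>p\<in>prime_factors n. Hpp h p (multiplicity p n))"

definition sigmaP_sq :: "nat set \<Rightarrow> (nat \<Rightarrow> real) \<Rightarrow> (nat \<Rightarrow> real) \<Rightarrow> real" where
  "sigmaP_sq P h g = (\<Sum>p\<in>P. (g p)^2 * (h p / p) * (1 - h p / p))"

end

theory Submission
  imports Defs
begin



lemma Hpp_bound:
  fixes x :: real and a :: nat
  assumes "0 \<le> x" "x \<le> 1" "a \<ge> 1"
  shows "\<bar>x * (1-x)^a + (-x)^a * (1-x)\<bar> \<le> x * (1-x)"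
proof (cases "a = 1")
  case True then show ?thesis using assms by simp
next
  case False
  then obtain b where b: "a = Suc (Suc b)" using assms(3)
    by (metis One_nat_def Suc_le_D not0_implies_Suc)
  have y1: "(1-x)^(Suc b) \<le> 1-x" proof -
    have "0 \<le> 1-x" "1-x \<le> 1" using assms by auto
    then show ?thesis by (metis power_Suc mult_left_le power_le_one mult.commute)
  qed
  have y2: "x^(Suc b) \<le> x" using assms
    by (metis power_Suc mult_left_le power_le_one)
  have "\<bar>x * (1-x)^a + (-x)^a * (1-x)\<bar> \<le> \<bar>x * (1-x)^a\<bar> + \<bar>(-x)^a * (1-x)\<bar>"
    by (rule abs_triangle_ineq)
  also have "\<dots> = x * (1-x) * ((1-x)^(Suc b) + x^(Suc b))"
  proof -
    have e1: "\<bar>x * (1-x)^a\<bar> = x * (1-x)^a" using assms by simp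
    have e2: "\<bar>(-x)^a * (1-x)\<bar> = x^a * (1-x)" using assms by (simp add: abs_mult power_abs)
    show ?thesis by (simp only: e1 e2) (simp add: b algebra_simps)
  qed
  also have "\<dots> \<le> x * (1-x) * ((1-x) + x)"
    using assms y1 y2 by (intro mult_left_mono) auto
  finally show ?thesis by simp
qed

lemma mult_prod_primes:
  assumes "finite J" "\<forall>j\<in>J. prime (f j :: nat)" "prime q"
  shows "multiplicity q (\<Prod>j\<in>J. f j) = card {j\<in>J. f j = q}"
proof -
  have "multiplicity q (\<Prod>j\<in>J. f j) = (\<Sum>j\<in>J. multiplicity q (f j))"
    using assms by (intro prime_elem_multiplicity_prod_distrib) (auto dest: prime_gt_0_nat)
  also have "\<dots> = (\<Sum>j\<in>J. if f j = q then 1 else 0)"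
    using assms by (intro sum.cong) (auto simp: prime_multiplicity_other)
  also have "\<dots> = card {j\<in>J. f j = q}"
    using assms by (simp add: sum.If_cases Int_def conj_commute)
  finally show ?thesis .
qed

lemma pf_prod_primes:
  assumes "finite J" "\<forall>j\<in>J. prime (f j :: nat)"
  shows "prime_factors (\<Prod>j\<in>J. f j) = f ` J"
proof -
  have "prime_factors (\<Prod>j\<in>J. f j) = \<Union>((prime_factors \<circ> f) ` J)"
    using assms by (intro prime_factors_prod) (auto dest: prime_gt_0_nat)
  also have "\<dots> = f ` J" using assms by (auto simp: prime_prime_factors)
  finally show ?thesis .
qed

lemma factor_bound:
  fixes P :: "nat set" and w :: "nat \<Rightarrow> real" and g :: "nat \<Rightarrow> nat \<Rightarrow> real"
  assumes P: "finite P" and w: "\<forall>x\<in>P. 0 \<le> w x"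
    and g: "\<forall>j\<in>{1..k}. \<forall>x\<in>P. 0 \<le> g j x \<and> g j x \<le> Gm" and Gm: "Gm \<ge> 1"
    and F: "F \<subseteq> {1..k}" "card F \<ge> 2"
    and K: "\<forall>j\<in>{1..k}. (\<Sum>x\<in>P. (g j x)^2 * w x) \<le> K"
  shows "(\<Sum>x\<in>P. w x * (\<Prod>j\<in>F. g j x)) \<le> Gm^k * K"
proof -
  have fF: "finite F" using F(1) finite_subset by blast
  obtain a where a: "a \<in> F" using F(2) by fastforce
  have "card (F - {a}) \<ge> 1" using F(2) fF a by simp
  then obtain b where b: "b \<in> F - {a}" by (metis all_not_in_conv card.empty not_one_le_zero)
  have ab: "a \<in> {1..k}" "b \<in> {1..k}" "a \<noteq> b" using a b F by auto
  have cF: "card (F - {a,b}) \<le> k"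
  proof -
    have "card (F - {a,b}) \<le> card F" using fF by (intro card_mono) auto
    also have "\<dots> \<le> card {1..k}" using F by (intro card_mono) auto
    finally show ?thesis by simp
  qed
  have pt: "w x * (\<Prod>j\<in>F. g j x) \<le> Gm^k * (((g a x)^2 * w x + (g b x)^2 * w x) / 2)"
    if x: "x \<in> P" for x
  proof -
    have split: "(\<Prod>j\<in>F. g j x) = g a x * g b x * (\<Prod>j\<in>F - {a,b}. g j x)"
    proof -
      have "F = insert a (insert b (F - {a,b}))" using a b by auto
      then have "(\<Prod>j\<in>F. g j x) = (\<Prod>j\<in>insert a (insert b (F - {a,b})). g j x)" by simp
      also have "\<dots> = g a x * g b x * (\<Prod>j\<in>F - {a,b}. g j x)"
        using fF ab by (simp add: mult.assoc)
      finally show ?thesis .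
    qed
    have r0: "0 \<le> (\<Prod>j\<in>F - {a,b}. g j x)" using g F x by (intro prod_nonneg) auto
    have r1: "(\<Prod>j\<in>F - {a,b}. g j x) \<le> (\<Prod>j\<in>F - {a,b}. Gm)"
      using g F x by (intro prod_mono) auto
    also have "\<dots> = Gm ^ card (F - {a,b})" by simp
    also have "\<dots> \<le> Gm ^ k" using Gm cF by (intro power_increasing) auto
    finally have r2: "(\<Prod>j\<in>F - {a,b}. g j x) \<le> Gm ^ k" .
    have ga: "0 \<le> g a x" "0 \<le> g b x" using g ab x by auto
    have amgm: "g a x * g b x \<le> ((g a x)^2 + (g b x)^2) / 2"
      using sum_squares_ge_zero[of "g a x - g b x" 0] by (simp add: power2_eq_square algebra_simps)
    have wx: "0 \<le> w x" using w x by auto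
    have "w x * (\<Prod>j\<in>F. g j x) = (w x * (g a x * g b x)) * (\<Prod>j\<in>F - {a,b}. g j x)"
      by (simp add: split mult.assoc)
    also have "\<dots> \<le> (w x * (g a x * g b x)) * Gm ^ k"
      using r2 wx ga by (intro mult_left_mono) auto
    also have "\<dots> \<le> (w x * (((g a x)^2 + (g b x)^2) / 2)) * Gm ^ k"
      using amgm wx Gm by (intro mult_right_mono mult_left_mono) auto
    finally show ?thesis by (simp add: algebra_simps)
  qed
  have "(\<Sum>x\<in>P. w x * (\<Prod>j\<in>F. g j x)) \<le> (\<Sum>x\<in>P. Gm^k * (((g a x)^2 * w x + (g b x)^2 * w x) / 2))"
    using pt by (intro sum_mono) auto
  also have "\<dots> = Gm^k * (((\<Sum>x\<in>P. (g a x)^2 * w x) + (\<Sum>x\<in>P. (g b x)^2 * w x)) / 2)"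
    by (simp add: sum_distrib_left[symmetric] sum_divide_distrib[symmetric] sum.distrib)
  also have "\<dots> \<le> Gm^k * ((K + K) / 2)"
    using K ab Gm by (intro mult_left_mono divide_right_mono add_mono) auto
  finally show ?thesis by simp
qed

lemma main_bound:
  fixes k :: nat and G :: real and P :: "nat set" and h :: "nat \<Rightarrow> real" and g :: "nat \<Rightarrow> nat \<Rightarrow> real"
  assumes k: "k > 0" and P: "finite P" and Pp: "\<forall>p\<in>P. prime p"
    and hb: "\<forall>d. d > 0 \<longrightarrow> 0 \<le> h d \<and> h d \<le> real d"
    and gb: "\<forall>j\<in>{1..k}. \<forall>p\<in>P. 0 \<le> g j p \<and> g j p \<le> G"
    and Kdef: "K = Max ((\<lambda>i. sigmaP_sq P h (g i)) ` {1..k})" and K1: "K \<ge> 1"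
  shows "\<bar>\<Sum>ps \<in> {ps \<in> PiE {1..k} (\<lambda>_. P).
              squarefull (\<Prod>i\<in>{1..k}. ps i) \<and> real (card (ps ` {1..k})) < real k / 2}.
          Hfun h (\<Prod>i\<in>{1..k}. ps i) * (\<Prod>j\<in>{1..k}. g j (ps j))\<bar>
       \<le> (real (k^k) * (max 1 G)^(k*k)) * (if even k then K powr (real k / 2 - 1) else K powr ((real k - 1) / 2))"
proof -
  define e where "e = (if even k then real k / 2 - 1 else (real k - 1) / 2)"
  have eq_if: "(if even k then K powr (real k / 2 - 1) else K powr ((real k - 1) / 2)) = K powr e"
    unfolding e_def by simp
  define T where "T = {ps \<in> PiE {1..k} (\<lambda>_. P).
              squarefull (\<Prod>i\<in>{1..k}. ps i) \<and> real (card (ps ` {1..k})) < real k / 2}"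
  define tm where "tm = (\<lambda>ps. Hfun h (\<Prod>i\<in>{1..k}. ps i) * (\<Prod>j\<in>{1..k}. g j (ps j)))"
  define w where "w = (\<lambda>q::nat. h q / q * (1 - h q / q))"
  define rep where "rep = (\<lambda>ps::nat\<Rightarrow>nat. restrict (\<lambda>j. LEAST i. i \<in> {1..k} \<and> ps i = ps j) {1..k})"
  define R where "R = PiE {1..k} (\<lambda>_. {1..k::nat})"
  define Gm where "Gm = max 1 G"
  define Bnd where "Bnd = Gm^(k*k) * K powr e"
  have Gm1: "Gm \<ge> 1" unfolding Gm_def by simp
  have K0: "K > 0" using K1 by simp
  have gbm: "\<forall>j\<in>{1..k}. \<forall>x\<in>P. 0 \<le> g j x \<and> g j x \<le> Gm" using gb unfolding Gm_def by force
  have xw: "0 \<le> h q / q \<and> h q / q \<le> 1" if "q \<in> P" for q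
  proof -
    have "q > 0" using Pp that prime_gt_0_nat by blast
    then show ?thesis using hb by auto
  qed
  have w0: "\<forall>x\<in>P. 0 \<le> w x" unfolding w_def using xw by (simp del: times_divide_eq_left times_divide_eq_right)
  have Kb: "\<forall>j\<in>{1..k}. (\<Sum>x\<in>P. (g j x)^2 * w x) \<le> K"
  proof
    fix j assume j: "j \<in> {1..k}"
    have "(\<Sum>x\<in>P. (g j x)^2 * w x) = sigmaP_sq P h (g j)"
      unfolding sigmaP_sq_def w_def by (simp add: mult.assoc)
    also have "\<dots> \<le> K" unfolding Kdef using j by (intro Max_ge) auto
    finally show "(\<Sum>x\<in>P. (g j x)^2 * w x) \<le> K" .
  qed
  have rep_in: "rep ps j \<in> {1..k} \<and> ps (rep ps j) = ps j" if "j \<in> {1..k}" for ps j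
  proof -
    have ex: "\<exists>i. i \<in> {1..k} \<and> ps i = ps j" using that by blast
    show ?thesis using LeastI_ex[OF ex] that unfolding rep_def by simp
  qed
  have rep_eq: "rep ps j = rep ps j'" if "j \<in> {1..k}" "j' \<in> {1..k}" "ps j = ps j'" for ps j j'
    using that unfolding rep_def by simp
  have Hb: "\<bar>Hfun h (\<Prod>i\<in>{1..k}. ps i)\<bar> \<le> (\<Prod>q\<in>ps ` {1..k}. w q)"
    if ps: "ps \<in> PiE {1..k} (\<lambda>_. P)" for ps
  proof -
    have pr: "\<forall>j\<in>{1..k}. prime (ps j)" using ps Pp by auto
    have pf: "prime_factors (\<Prod>i\<in>{1..k}. ps i) = ps ` {1..k}"
      using pr by (intro pf_prod_primes) auto
    have "\<bar>Hfun h (\<Prod>i\<in>{1..k}. ps i)\<bar> = (\<Prod>q\<in>ps ` {1..k}. \<bar>Hpp h q (multiplicity q (\<Prod>i\<in>{1..k}. ps i))\<bar>)"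
      unfolding Hfun_def pf by (simp add: abs_prod)
    also have "\<dots> \<le> (\<Prod>q\<in>ps ` {1..k}. w q)"
    proof (intro prod_mono conjI)
      fix q assume q: "q \<in> ps ` {1..k}"
      have qP: "q \<in> P" using q ps by auto
      have "q \<in> prime_factors (\<Prod>i\<in>{1..k}. ps i)" using q pf by simp
      then have "multiplicity q (\<Prod>i\<in>{1..k}. ps i) > 0"
        by (simp add: prime_factors_multiplicity)
      then have m: "multiplicity q (\<Prod>i\<in>{1..k}. ps i) \<ge> 1" by simp
      show "\<bar>Hpp h q (multiplicity q (\<Prod>i\<in>{1..k}. ps i))\<bar> \<le> w q"
        unfolding Hpp_def w_def by (rule Hpp_bound) (use xw[OF qP] m in auto)
    qed auto
    finally show ?thesis .
  qed
  have finT: "finite T" unfolding T_def using P by (intro finite_subset[OF _ finite_PiE[of "{1..k}" "\<lambda>_. P"]]) auto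
  have finR: "finite R" unfolding R_def by (auto intro: finite_PiE)
  have repR: "rep ` T \<subseteq> R"
  proof
    fix r assume "r \<in> rep ` T"
    then obtain ps where "r = rep ps" by auto
    then show "r \<in> R" unfolding R_def using rep_in by (auto simp: rep_def)
  qed
  have per_r: "(\<Sum>ps\<in>{ps\<in>T. rep ps = r}. \<bar>tm ps\<bar>) \<le> Bnd" if rR: "r \<in> R" for r
  proof (cases "{ps\<in>T. rep ps = r} = {}")
    case True
    have "0 \<le> Bnd" unfolding Bnd_def using Gm1 K0 by simp
    then show ?thesis by (simp only: True sum.empty)
  next
    case False
    define Fr where "Fr = {ps\<in>T. rep ps = r}"
    obtain ps0 where ps0: "ps0 \<in> Fr" using False unfolding Fr_def by blast
    define I where "I = r ` {1..k}"
    define fib where "fib = (\<lambda>i. {j\<in>{1..k}. r j = i})"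
    have FrT: "ps \<in> PiE {1..k} (\<lambda>_. P)" "rep ps = r" if "ps \<in> Fr" for ps
      using that unfolding Fr_def T_def by auto
    have f1: "r j \<in> {1..k} \<and> ps (r j) = ps j" if "ps \<in> Fr" "j \<in> {1..k}" for ps j
      using rep_in[OF that(2), of ps] FrT[OF that(1)] by simp
    have f2: "(ps j = ps j') = (r j = r j')" if "ps \<in> Fr" "j \<in> {1..k}" "j' \<in> {1..k}" for ps j j'
      using rep_eq[of j j' ps] f1[OF that(1) that(2)] f1[OF that(1) that(3)] FrT[OF that(1)] that
      by metis
    have Isub: "I \<subseteq> {1..k}" unfolding I_def using f1[OF ps0] by auto
    have finI: "finite I" unfolding I_def by simp
    have rfix: "r i = i" if "i \<in> I" for i
    proof -
      have "i \<in> r ` {1..k}" using that unfolding I_def .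
      then obtain a where a: "a \<in> {1..k}" "i = r a" by blast
      have "r a \<in> {1..k}" "ps0 (r a) = ps0 a" using f1[OF ps0 a(1)] by auto
      then have "r (r a) = r a" using f2[OF ps0, of "r a" a] a by simp
      then show ?thesis using a by simp
    qed
    have inj: "inj_on ps I" if "ps \<in> Fr" for ps
    proof
      fix i i' assume ii: "i \<in> I" "i' \<in> I" "ps i = ps i'"
      have "i \<in> {1..k}" "i' \<in> {1..k}" using ii Isub by blast+
      then have "r i = r i'" using f2[OF that, of i i'] ii by blast
      then show "i = i'" using rfix ii by metis
    qed
    have img: "ps ` {1..k} = ps ` I" if "ps \<in> Fr" for ps
    proof
      show "ps ` {1..k} \<subseteq> ps ` I"
      proof
        fix y assume "y \<in> ps ` {1..k}"
        then obtain j where j: "j \<in> {1..k}" "y = ps j" by auto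
        then have "y = ps (r j)" using f1[OF that j(1)] by simp
        then show "y \<in> ps ` I" unfolding I_def using j by auto
      qed
      show "ps ` I \<subseteq> ps ` {1..k}" using Isub by auto
    qed
    have cardI: "real (card I) \<le> e"
    proof -
      have "card I = card (ps0 ` I)" using card_image[OF inj[OF ps0]] by simp
      also have "\<dots> = card (ps0 ` {1..k})" using img[OF ps0] by simp
      finally have "real (card I) < real k / 2" using ps0 unfolding Fr_def T_def by simp
      then show ?thesis unfolding e_def by (cases "even k") (auto elim!: evenE oddE)
    qed
    have cardIk: "card I \<le> k" using card_mono[OF _ Isub] by simp
    have fibsize: "card (fib i) \<ge> 2" if iI: "i \<in> I" for i
    proof -
      have ps0P: "ps0 \<in> PiE {1..k} (\<lambda>_. P)" using FrT[OF ps0] by simp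
      have sf: "squarefull (\<Prod>j\<in>{1..k}. ps0 j)" using ps0 unfolding Fr_def T_def by simp
      have ik: "i \<in> {1..k}" using iI Isub by auto
      have pr: "\<forall>j\<in>{1..k}. prime (ps0 j)" using ps0P Pp by auto
      have q: "prime (ps0 i)" using pr ik by auto
      have "ps0 i dvd (\<Prod>j\<in>{1..k}. ps0 j)" using ik by (intro dvd_prodI) auto
      then have "(ps0 i)^2 dvd (\<Prod>j\<in>{1..k}. ps0 j)" using sf q unfolding squarefull_def by blast
      then have "2 \<le> multiplicity (ps0 i) (\<Prod>j\<in>{1..k}. ps0 j)"
      proof -
        have nz: "(\<Prod>j\<in>{1..k}. ps0 j) \<noteq> 0" using pr by (auto dest: prime_gt_0_nat)
        have nu: "\<not> is_unit (ps0 i)" using q not_prime_unit by blast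
        show ?thesis using multiplicity_geI[OF nz nu] \<open>(ps0 i)^2 dvd _\<close> by blast
      qed
      also have "\<dots> = card {j\<in>{1..k}. ps0 j = ps0 i}"
        using pr q by (intro mult_prod_primes) auto
      also have "{j\<in>{1..k}. ps0 j = ps0 i} = fib i"
        unfolding fib_def using f2[OF ps0 _ ik] rfix[OF iI] by auto
      finally show ?thesis .
    qed
    define B where "B = (\<lambda>q. \<Prod>i\<in>I. (w (q i) * (\<Prod>j\<in>fib i. g j (q i))))"
    have tmb: "\<bar>tm ps\<bar> \<le> B (restrict ps I)" if psF: "ps \<in> Fr" for ps
    proof -
      have psP: "ps \<in> PiE {1..k} (\<lambda>_. P)" using FrT[OF psF] by simp
      have g0: "0 \<le> (\<Prod>j\<in>{1..k}. g j (ps j))"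
      proof (intro prod_nonneg)
        fix a assume a: "a \<in> {1..k}"
        then have "ps a \<in> P" using psP by (auto simp: PiE_iff)
        then show "0 \<le> g a (ps a)" using gb a by blast
      qed
      have "\<bar>tm ps\<bar> = \<bar>Hfun h (\<Prod>i\<in>{1..k}. ps i)\<bar> * (\<Prod>j\<in>{1..k}. g j (ps j))"
        unfolding tm_def using g0 by (simp add: abs_mult)
      also have "\<dots> \<le> (\<Prod>q\<in>ps ` {1..k}. w q) * (\<Prod>j\<in>{1..k}. g j (ps j))"
        using Hb[OF psP] g0 by (intro mult_right_mono)
      also have "(\<Prod>q\<in>ps ` {1..k}. w q) = (\<Prod>i\<in>I. w (ps i))"
        unfolding img[OF psF] using prod.reindex[OF inj[OF psF], of w] by simp
      also have "(\<Prod>j\<in>{1..k}. g j (ps j)) = (\<Prod>i\<in>I. \<Prod>j\<in>fib i. g j (ps j))"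
        unfolding fib_def I_def by (rule prod.group[symmetric]) auto
      also have "\<dots> = (\<Prod>i\<in>I. \<Prod>j\<in>fib i. g j (ps i))"
      proof (intro prod.cong refl)
        fix i j assume "i \<in> I" "j \<in> fib i"
        then have "j \<in> {1..k}" "r j = i" unfolding fib_def by auto
        then show "g j (ps j) = g j (ps i)" using f1[OF psF, of j] by simp
      qed
      also have "(\<Prod>i\<in>I. w (ps i)) * (\<Prod>i\<in>I. \<Prod>j\<in>fib i. g j (ps i)) = B (restrict ps I)"
        unfolding B_def by (simp add: prod.distrib)
      finally show ?thesis .
    qed
    have injR: "inj_on (\<lambda>ps. restrict ps I) Fr"
    proof
      fix ps ps' assume a: "ps \<in> Fr" "ps' \<in> Fr" "restrict ps I = restrict ps' I"
      show "ps = ps'"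
      proof
        fix j show "ps j = ps' j"
        proof (cases "j \<in> {1..k}")
          case True
          have "r j \<in> I" unfolding I_def using True by auto
          moreover have "restrict ps I (r j) = restrict ps' I (r j)" using a(3) by simp
          ultimately have "ps (r j) = ps' (r j)" by simp
          then show ?thesis using f1[OF a(1) True] f1[OF a(2) True] by simp
        next
          case False
          show ?thesis using PiE_arb[OF FrT(1)[OF a(1)] False] PiE_arb[OF FrT(1)[OF a(2)] False] by simp
        qed
      qed
    qed
    have B0: "0 \<le> B q" if "q \<in> PiE I (\<lambda>_. P)" for q
    proof -
      have qi: "q i \<in> P" if "i \<in> I" for i using \<open>q \<in> PiE I (\<lambda>_. P)\<close> that by (auto simp: PiE_iff)
      show ?thesis unfolding B_def
      proof (intro prod_nonneg mult_nonneg_nonneg)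
        fix i j assume i: "i \<in> I" and j: "j \<in> fib i"
        have "j \<in> {1..k}" using j unfolding fib_def by blast
        then show "0 \<le> g j (q i)" using gb qi[OF i] by blast
      next
        fix i assume i: "i \<in> I"
        show "0 \<le> w (q i)" using w0 qi[OF i] by blast
      qed
    qed
    have "(\<Sum>ps\<in>Fr. \<bar>tm ps\<bar>) \<le> (\<Sum>ps\<in>Fr. B (restrict ps I))"
      using tmb by (intro sum_mono) auto
    also have "\<dots> = (\<Sum>q\<in>(\<lambda>ps. restrict ps I) ` Fr. B q)"
      using sum.reindex[OF injR, of B] by simp
    also have "\<dots> \<le> (\<Sum>q\<in>PiE I (\<lambda>_. P). B q)"
    proof (intro sum_mono2)
      show "finite (PiE I (\<lambda>_. P))" using P finI by (intro finite_PiE) auto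
      show "(\<lambda>ps. restrict ps I) ` Fr \<subseteq> PiE I (\<lambda>_. P)"
        using Isub by (auto dest!: FrT(1) simp: PiE_iff)
    qed (use B0 in auto)
    also have "\<dots> = (\<Prod>i\<in>I. \<Sum>x\<in>P. w x * (\<Prod>j\<in>fib i. g j x))"
      unfolding B_def using prod_sum_PiE[OF finI, of "\<lambda>_. P" "\<lambda>i x. w x * (\<Prod>j\<in>fib i. g j x)"] P
      by simp
    also have "\<dots> \<le> (\<Prod>i\<in>I. Gm^k * K)"
    proof (intro prod_mono conjI)
      fix i assume i: "i \<in> I"
      show "0 \<le> (\<Sum>x\<in>P. w x * (\<Prod>j\<in>fib i. g j x))"
        using w0 gb by (intro sum_nonneg mult_nonneg_nonneg prod_nonneg) (auto simp: fib_def)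
      show "(\<Sum>x\<in>P. w x * (\<Prod>j\<in>fib i. g j x)) \<le> Gm^k * K"
        by (rule factor_bound[OF P w0 gbm Gm1 _ fibsize[OF i] Kb]) (auto simp: fib_def)
    qed
    also have "\<dots> = Gm^(k * card I) * K ^ card I"
      by (simp add: power_mult_distrib power_mult)
    also have "\<dots> \<le> Gm^(k*k) * K powr e"
    proof (intro mult_mono)
      show "Gm^(k * card I) \<le> Gm^(k*k)" using Gm1 cardIk by (intro power_increasing) auto
      have "K ^ card I = K powr (real (card I))" using K0 by (simp add: powr_realpow)
      also have "\<dots> \<le> K powr e" using K1 cardI by (intro powr_mono) auto
      finally show "K ^ card I \<le> K powr e" .
    qed (use Gm1 K0 in auto)
    finally show ?thesis unfolding Bnd_def Fr_def .
  qed
  have "\<bar>\<Sum>ps\<in>T. tm ps\<bar> \<le> (\<Sum>ps\<in>T. \<bar>tm ps\<bar>)" by (rule sum_abs)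
  also have "\<dots> = (\<Sum>r\<in>R. \<Sum>ps\<in>{ps\<in>T. rep ps = r}. \<bar>tm ps\<bar>)"
    using sum.group[OF finT finR repR, of "\<lambda>ps. \<bar>tm ps\<bar>"] by simp
  also have "\<dots> \<le> (\<Sum>r\<in>R. Bnd)" using per_r by (intro sum_mono) auto
  also have "\<dots> = real (k^k) * Bnd" unfolding R_def by (simp add: card_PiE)
  finally show ?thesis unfolding eq_if T_def tm_def Bnd_def Gm_def by (simp add: mult.assoc)
qed


theorem mainTheorem11:
  fixes k :: nat and G :: real
  assumes "k > 0" and "G > 0"
  shows "\<exists>C::real. \<forall>(P::nat set) (h::nat \<Rightarrow> real) (g::nat \<Rightarrow> nat \<Rightarrow> real).
     finite P \<longrightarrow> (\<forall>p\<in>P. prime p) \<longrightarrow>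
     multiplicative_fn h \<longrightarrow> (\<forall>d. d > 0 \<longrightarrow> 0 \<le> h d \<and> h d \<le> real d) \<longrightarrow>
     (\<forall>j\<in>{1..k}. strongly_additive (g j)) \<longrightarrow>
     (\<forall>j\<in>{1..k}. \<forall>p\<in>P. 0 \<le> g j p \<and> g j p \<le> G) \<longrightarrow>
     (let K = Max ((\<lambda>i. sigmaP_sq P h (g i)) ` {1..k}) in
       K \<ge> 1 \<longrightarrow>
       \<bar>\<Sum>ps \<in> {ps \<in> PiE {1..k} (\<lambda>_. P).
              squarefull (\<Prod>i\<in>{1..k}. ps i) \<and> real (card (ps ` {1..k})) < real k / 2}.
          Hfun h (\<Prod>i\<in>{1..k}. ps i) * (\<Prod>j\<in>{1..k}. g j (ps j))\<bar>
       \<le> C * (if even k then K powr (real k / 2 - 1) else K powr ((real k - 1) / 2)))"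
  proof -
  show ?thesis
  proof (intro exI allI impI)
    fix P :: "nat set" and h :: "nat \<Rightarrow> real" and g :: "nat \<Rightarrow> nat \<Rightarrow> real"
    assume a: "finite P" "\<forall>p\<in>P. prime p" "multiplicative_fn h"
      "\<forall>d. d > 0 \<longrightarrow> 0 \<le> h d \<and> h d \<le> real d"
      "\<forall>j\<in>{1..k}. strongly_additive (g j)"
      "\<forall>j\<in>{1..k}. \<forall>p\<in>P. 0 \<le> g j p \<and> g j p \<le> G"
    show "let K = Max ((\<lambda>i. sigmaP_sq P h (g i)) ` {1..k}) in
       K \<ge> 1 \<longrightarrow>
       \<bar>\<Sum>ps \<in> {ps \<in> PiE {1..k} (\<lambda>_. P).
              squarefull (\<Prod>i\<in>{1..k}. ps i) \<and> real (card (ps ` {1..k})) < real k / 2}.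
          Hfun h (\<Prod>i\<in>{1..k}. ps i) * (\<Prod>j\<in>{1..k}. g j (ps j))\<bar>
       \<le> (real (k^k) * (max 1 G)^(k*k)) * (if even k then K powr (real k / 2 - 1) else K powr ((real k - 1) / 2))"
      unfolding Let_def
      using main_bound[OF assms(1) a(1) a(2) a(4) a(6) refl] by blast
  qed
qed

end
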